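(* Let $\mathcal{X}$ be an input space with metric $d$, let $\Theta$ be a parameter (hypothesis) space with metric $d$, and let $\mathcal{Y}$ be an output space which is a normed vector space with norm $\|\cdot\|$. Let $f:\mathcal{X}\times\Theta\to\mathcal{Y}$, $(x,\theta)\mapsto f(x;\theta)$, be a parameterized family of hypotheses, let $\theta^*\in\Theta$ and set $f^*(x)=f(x;\theta^* )$. Let $\mathcal{L}:\mathcal{Y}\times\mathcal{X}\to\mathbb{R}$ be a loss function, and for a probability distribution $r$ on $\mathcal{X}$ define the error $e(\theta,r)=\mathbb{E}_{x\sim r}[\mathcal{L}(f(x;\theta),x)]$. Let $p$ (test distribution) and $q$ (training distribution) be probability distributions on $\mathcal{X}$, let $W(p,q)$ be their 1-Wasserstein distance with respect to $d$, and let $\Theta_q=\{\theta\in\Theta : e(\theta,q)=0\}$. Let $\theta$ be a random variable with some probability distribution on $\Theta$ such that $\mathbb{P}(\theta\in\Theta_q)>0$, and for $\varepsilon>0$ define the inductive bias complexity $$\tilde I=-\log \mathbb{P}\big(e(\theta,p)\le\varepsilon \mid e(\theta,q)=0\big).$$ Suppose that: (i) $\mathcal{L}(y,x)\ge 0$ for all $y,x$, with equality if and only if $y=f^*(x)$; (ii) $\mathcal{L}(y+f^*(x_2)-f^*(x_1),x_2)=\mathcal{L}(y,x_1)$ for all $y\in\mathcal{Y}$, $x_1,x_2\in\mathcal{X}$; (iii) there is a constant $L_{\mathcal{L}}$ with $\mathcal{L}(y+\delta,x)-\mathcal{L}(y,x)\le L_{\mathcal{L}}\|\delta\|$ for all $y,\delta\in\mathcal{Y}$,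 $x\in\mathcal{X}$; (iv) there is a constant $L_f$ with $\|f(x_1;\theta_1)-f(x_1;\theta_2)-f(x_2;\theta_1)+f(x_2;\theta_2)\|\le L_f\, d(x_1,x_2)\, d(\theta_1,\theta_2)$ for all $x_1,x_2\in\mathcal{X}$, $\theta_1,\theta_2\in\Theta$. Then $$\tilde I\le -\log \mathbb{P}\left(d(\theta,\theta^* )\le \frac{\varepsilon}{L_{\mathcal{L}}L_f W(p,q)} \;\middle|\; \theta\in\Theta_q\right).$$
   Context: The ratio $\varepsilon/(L_{\mathcal{L}}L_fW(p,q))$ is interpreted as $+\infty$ if its denominator is $0$. All expectations are assumed to exist. $\log$ denotes the logarithm (any fixed base). *)

theory Defs
  imports "HOL-Probability.Probability"
begin

definition err :: "('x \<Rightarrow> 't \<Rightarrow> 'y) \<Rightarrow> ('y \<Rightarrow> 'x \<Rightarrow> real) \<Rightarrow> 't \<Rightarrow> 'x measure \<Rightarrow> real" where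
  "err f L th r = (\<integral>x. L (f x th) x \<partial>r)"

definition couplings :: "'x measure \<Rightarrow> 'x measure \<Rightarrow> ('x \<times> 'x) measure set" where
  "couplings p q = {g. prob_space g \<and> sets g = sets (p \<Otimes>\<^sub>M q) \<and>
                        distr g p fst = p \<and> distr g q snd = q}"

definition wasserstein1 :: "'x::metric_space measure \<Rightarrow> 'x measure \<Rightarrow> ennreal" where
  "wasserstein1 p q = (INF g \<in> couplings p q. \<integral>\<^sup>+ z. ennreal (dist (fst z) (snd z)) \<partial>g)"

definition neglog :: "real \<Rightarrow> real \<Rightarrow> ereal" where
  "neglog b t = (if t = 0 then \<infinity> else ereal (- log b t))"

end

theory Submission
  imports Defs
begin

lemma nn_integral_cmult_le:
  fixes c :: ennreal
  assumes "c < top"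
  shows "(\<integral>\<^sup>+ x. c * u x \<partial>M) \<le> c * integral\<^sup>N M u"
proof (cases "c = 0")
  case True then show ?thesis by simp
next
  case False
  show ?thesis unfolding nn_integral_def
  proof (rule SUP_least)
    fix s assume "s \<in> {g. simple_function M g \<and> g \<le> (\<lambda>x. c * u x)}"
    then have s: "simple_function M s" "\<And>x. s x \<le> c * u x" by (auto simp: le_fun_def)
    define s' where "s' x = s x / c" for x
    have s'simp: "simple_function M s'" unfolding s'_def
      using s(1) by (rule simple_function_compose1)
    have "s' \<le> u" unfolding le_fun_def s'_def
    proof
      fix x
      have "s x / c \<le> c * u x / c" by (rule divide_right_mono_ennreal[OF s(2)])
      also have "\<dots> = u x" using False assms
        by (metis ennreal_times_divide mult.commute mult_divide_eq_ennreal top.not_eq_extremum)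
      finally show "s x / c \<le> u x" .
    qed
    have eq: "\<And>x. s x = c * s' x" unfolding s'_def using False assms
      by (metis ennreal_times_divide mult.commute mult_divide_eq_ennreal top.not_eq_extremum)
    have "integral\<^sup>S M s = integral\<^sup>S M (\<lambda>x. c * s' x)"
      using eq by presburger
    also have "\<dots> = c * integral\<^sup>S M s'"
      by (rule simple_integral_mult[OF s'simp])
    also have "\<dots> \<le> c * (SUP g\<in>{g. simple_function M g \<and> g \<le> u}. integral\<^sup>S M g)"
      by (intro mult_left_mono SUP_upper) (auto simp: s'simp \<open>s' \<le> u\<close>)
    finally show "integral\<^sup>S M s \<le> c * (SUP g\<in>{g. simple_function M g \<and> g \<le> u}. integral\<^sup>S M g)" .
  qed
qed

lemma divide_times_le_ennreal: "(a::ennreal) / D * D \<le> a"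
proof (cases "D = 0 \<or> D = top")
  case True then show ?thesis by (auto simp: ennreal_top_divide)
next
  case False then show ?thesis
    by (metis ennreal_divide_self ennreal_divide_times mult.right_neutral order.refl top.not_eq_extremum)
qed

lemma product_coupling:
  assumes "prob_space p" "prob_space q"
  shows "p \<Otimes>\<^sub>M q \<in> couplings p q"
proof -
  interpret P: prob_space p by fact
  interpret Q: prob_space q by fact
  interpret PQ: pair_prob_space p q by unfold_locales
  have "distr (p \<Otimes>\<^sub>M q) p fst = p" by (rule Q.distr_pair_fst)
  moreover have "distr (p \<Otimes>\<^sub>M q) q snd = q"
  proof (intro measure_eqI)
    fix A assume A: "A \<in> sets (distr (p \<Otimes>\<^sub>M q) q snd)"
    from A have "emeasure (distr (p \<Otimes>\<^sub>M q) q snd) A = emeasure (p \<Otimes>\<^sub>M q) (space p \<times> A)"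
      by (auto simp add: emeasure_distr space_pair_measure dest: sets.sets_into_space intro!: arg_cong2[where f=emeasure])
    with A show "emeasure (distr (p \<Otimes>\<^sub>M q) q snd) A = emeasure q A"
      using Q.emeasure_pair_measure_Times[OF sets.top, of A p] P.emeasure_space_1 by simp
  qed simp
  ultimately show ?thesis unfolding couplings_def
    using PQ.prob_space_axioms by auto
qed


theorem theorem1:
  fixes f :: "'x::metric_space \<Rightarrow> 't::metric_space \<Rightarrow> 'y::real_normed_vector"
    and L :: "'y \<Rightarrow> 'x \<Rightarrow> real"
    and thstar :: 't
    and p q :: "'x measure"
    and M :: "'w measure"
    and th :: "'w \<Rightarrow> 't"
    and LL Lf eps b :: real
  assumes b: "1 < b"
    and p: "prob_space p" "sets p = sets borel"
    and q: "prob_space q" "sets q = sets borel"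
    and M: "prob_space M"
    and th_rv: "th \<in> M \<rightarrow>\<^sub>M borel"
    and int_p: "\<And>t. integrable p (\<lambda>x. L (f x t) x)"
    and int_q: "\<And>t. integrable q (\<lambda>x. L (f x t) x)"
    and meas_q: "{w \<in> space M. err f L (th w) q = 0} \<in> sets M"
    and meas_p: "{w \<in> space M. err f L (th w) p \<le> eps} \<in> sets M"
    and pos: "\<P>(w in M. err f L (th w) q = 0) > 0"
    and eps: "eps > 0"
    and A1: "\<And>y x. L y x \<ge> 0 \<and> (L y x = 0 \<longleftrightarrow> y = f x thstar)"
    and A2: "\<And>y x1 x2. L (y + f x2 thstar - f x1 thstar) x2 = L y x1"
    and LL: "LL \<ge> 0"
    and A3: "\<And>y d x. L (y + d) x - L y x \<le> LL * norm d"
    and Lf: "Lf \<ge> 0"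
    and A4: "\<And>x1 x2 t1 t2. norm (f x1 t1 - f x1 t2 - f x2 t1 + f x2 t2)
                             \<le> Lf * dist x1 x2 * dist t1 t2"
  shows "neglog b (\<P>(w in M. err f L (th w) p \<le> eps \<bar> err f L (th w) q = 0))
         \<le> neglog b (\<P>(w in M. ennreal (dist (th w) thstar)
                     \<le> ennreal eps / (ennreal (LL * Lf) * wasserstein1 p q)
                   \<bar> err f L (th w) q = 0))"
proof -
  interpret Mp: prob_space M by (rule M)
  define K where "K = LL * Lf"
  define W where "W = wasserstein1 p q"
  have K0: "K \<ge> 0" unfolding K_def using LL Lf by simp
  have key: "err f L t p \<le> eps"
    if t0: "err f L t q = 0"
      and td: "ennreal (dist t thstar) \<le> ennreal eps / (ennreal K * W)" for t
  proof -
    define h where "h x = L (f x t) x" for x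
    have hnn: "h x \<ge> 0" for x unfolding h_def using A1 by simp
    have hmeas: "h \<in> borel_measurable borel"
      using borel_measurable_integrable[OF int_p[of t]] measurable_cong_sets[OF p(2) refl, of borel]
      unfolding h_def by metis
    have pw: "h x2 \<le> h x1 + K * dist x2 x1 * dist t thstar" for x1 x2
    proof -
      define y where "y = f x1 t"
      define y' where "y' = y + f x2 thstar - f x1 thstar"
      have e1: "L y' x2 = h x1" unfolding y'_def y_def h_def by (rule A2)
      have e2: "f x2 t = y' + (f x2 t - f x2 thstar - f x1 t + f x1 thstar)"
        unfolding y'_def y_def by (simp add: algebra_simps)
      have "L (f x2 t) x2 - L y' x2 \<le> LL * norm (f x2 t - f x2 thstar - f x1 t + f x1 thstar)"
        using A3[of y' "f x2 t - f x2 thstar - f x1 t + f x1 thstar" x2] e2 by simp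
      also have "\<dots> \<le> LL * (Lf * dist x2 x1 * dist t thstar)"
        by (rule mult_left_mono[OF A4 LL])
      finally show ?thesis using e1 unfolding h_def K_def by (simp add: algebra_simps)
    qed
    define c where "c = K * dist t thstar"
    have c0: "c \<ge> 0" unfolding c_def using K0 by simp
    have errp0: "err f L t p \<ge> 0" unfolding err_def using hnn unfolding h_def by simp
    have bound: "ennreal (err f L t p) \<le> ennreal c * (\<integral>\<^sup>+ z. ennreal (dist (fst z) (snd z)) \<partial>g)"
      if g: "g \<in> couplings p q" for g
    proof -
      from g have gs: "sets g = sets (p \<Otimes>\<^sub>M q)" and gp: "distr g p fst = p"
        and gq: "distr g q snd = q" unfolding couplings_def by auto
      have mfst: "fst \<in> measurable g p"
        using measurable_cong_sets[OF gs refl] measurable_fst by blast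
      have msnd: "snd \<in> measurable g q"
        using measurable_cong_sets[OF gs refl] measurable_snd by blast
      have hp: "h \<in> borel_measurable p" using hmeas measurable_cong_sets[OF p(2) refl] by blast
      have hq: "h \<in> borel_measurable q" using hmeas measurable_cong_sets[OF q(2) refl] by blast
      have "ennreal (err f L t p) = (\<integral>\<^sup>+ x. ennreal (h x) \<partial>p)"
        unfolding err_def h_def
        by (rule nn_integral_eq_integral[symmetric]) (use int_p hnn h_def in auto)
      also have "\<dots> = (\<integral>\<^sup>+ x. ennreal (h x) \<partial>(distr g p fst))" using gp by simp
      also have "\<dots> = (\<integral>\<^sup>+ z. ennreal (h (fst z)) \<partial>g)"
        by (rule nn_integral_distr[OF mfst]) (use hp in measurable)
      also have "\<dots> \<le> (\<integral>\<^sup>+ z. ennreal c * ennreal (dist (fst z) (snd z)) \<partial>g)"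
      proof (rule nn_integral_mono_AE)
        have "(\<integral>\<^sup>+ z. ennreal (h (snd z)) \<partial>g) = (\<integral>\<^sup>+ x. ennreal (h x) \<partial>(distr g q snd))"
          by (rule nn_integral_distr[OF msnd, symmetric]) (use hq in measurable)
        also have "\<dots> = (\<integral>\<^sup>+ x. ennreal (h x) \<partial>q)" using gq by simp
        also have "\<dots> = ennreal (err f L t q)"
          unfolding err_def h_def
          by (rule nn_integral_eq_integral) (use int_q hnn h_def in auto)
        finally have "(\<integral>\<^sup>+ z. ennreal (h (snd z)) \<partial>g) = 0" using t0 by simp
        moreover have "(\<lambda>z. ennreal (h (snd z))) \<in> borel_measurable g"
          using hq msnd by measurable
        ultimately have "AE z in g. ennreal (h (snd z)) = 0"
          using nn_integral_0_iff_AE by blast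
        then show "AE z in g. ennreal (h (fst z)) \<le> ennreal c * ennreal (dist (fst z) (snd z))"
        proof (rule AE_mp, intro AE_I2 impI)
          fix z :: "'x \<times> 'x" assume "ennreal (h (snd z)) = 0"
          then have "h (snd z) = 0" using hnn by simp
          then have "h (fst z) \<le> c * dist (fst z) (snd z)"
            using pw[of "fst z" "snd z"] unfolding c_def by (simp add: mult_ac)
          then show "ennreal (h (fst z)) \<le> ennreal c * ennreal (dist (fst z) (snd z))"
            by (simp add: ennreal_mult''[symmetric] c0 ennreal_leI)
        qed
      qed
      also have "\<dots> \<le> ennreal c * (\<integral>\<^sup>+ z. ennreal (dist (fst z) (snd z)) \<partial>g)"
        by (rule nn_integral_cmult_le) simp
      finally show ?thesis .
    qed
    have "ennreal (err f L t p) \<le> ennreal c * W"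
    proof (cases "c = 0")
      case True
      then show ?thesis using bound[OF product_coupling[OF p(1) q(1)]] by simp
    next
      case False
      then have cpos: "c > 0" using c0 by simp
      have "ennreal (err f L t p / c) \<le> W" unfolding W_def wasserstein1_def
      proof (rule INF_greatest)
        fix g assume g: "g \<in> couplings p q"
        have "ennreal (err f L t p / c) = ennreal (err f L t p) / ennreal c"
          by (simp add: divide_ennreal errp0 cpos)
        also have "\<dots> \<le> (\<integral>\<^sup>+ z. ennreal (dist (fst z) (snd z)) \<partial>g)"
          by (rule divide_le_posI_ennreal) (use cpos bound[OF g] in auto)
        finally show "ennreal (err f L t p / c) \<le> (\<integral>\<^sup>+ z. ennreal (dist (fst z) (snd z)) \<partial>g)" .
      qed
      then have "ennreal (err f L t p / c) * ennreal c \<le> W * ennreal c"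
        by (rule mult_right_mono) simp
      moreover have "ennreal (err f L t p / c) * ennreal c = ennreal (err f L t p)"
        using cpos errp0 by (simp add: ennreal_mult''[symmetric])
      ultimately show ?thesis by (simp add: mult.commute)
    qed
    also have "ennreal c * W = ennreal (dist t thstar) * (ennreal K * W)"
      unfolding c_def using K0 by (simp add: ennreal_mult mult_ac)
    also have "\<dots> \<le> ennreal eps / (ennreal K * W) * (ennreal K * W)"
      by (rule mult_right_mono[OF td]) simp
    also have "\<dots> \<le> ennreal eps" by (rule divide_times_le_ennreal)
    finally show ?thesis using eps by (simp add: ennreal_le_iff)
  qed
  define P1 where "P1 = \<P>(w in M. err f L (th w) p \<le> eps \<bar> err f L (th w) q = 0)"
  define P2 where "P2 = \<P>(w in M. ennreal (dist (th w) thstar)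
                     \<le> ennreal eps / (ennreal (LL * Lf) * wasserstein1 p q)
                   \<bar> err f L (th w) q = 0)"
  have sub: "{w \<in> space M. ennreal (dist (th w) thstar) \<le> ennreal eps / (ennreal (LL * Lf) * wasserstein1 p q)
      \<and> err f L (th w) q = 0} \<subseteq> {w \<in> space M. err f L (th w) p \<le> eps \<and> err f L (th w) q = 0}"
    using key unfolding K_def W_def by auto
  have msets: "{w \<in> space M. err f L (th w) p \<le> eps \<and> err f L (th w) q = 0} \<in> sets M"
  proof -
    have "{w \<in> space M. err f L (th w) p \<le> eps \<and> err f L (th w) q = 0}
        = {w \<in> space M. err f L (th w) p \<le> eps} \<inter> {w \<in> space M. err f L (th w) q = 0}" by auto
    then show ?thesis using meas_p meas_q by auto
  qed
  have P21: "P2 \<le> P1" unfolding P1_def P2_def cond_prob_def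
    by (intro divide_right_mono Mp.finite_measure_mono[OF sub msets]) simp
  have P20: "P2 \<ge> 0" unfolding P2_def cond_prob_def by simp
  have "neglog b P1 \<le> neglog b P2"
  proof (cases "P2 = 0")
    case True then show ?thesis unfolding neglog_def by simp
  next
    case False
    then have "P2 > 0" using P20 by simp
    then have "P1 > 0" using P21 by simp
    have "log b P2 \<le> log b P1" using b \<open>P2 > 0\<close> \<open>P1 > 0\<close> P21 by simp
    then show ?thesis unfolding neglog_def using \<open>P2 > 0\<close> \<open>P1 > 0\<close> by simp
  qed
  then show ?thesis unfolding P1_def P2_def .
qed
end
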